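(* Let $\Psi=(\psi_k)_{k\in\mathbb N}$ with $\psi_k\in(-\pi/2,\pi/2)$, let $F_n=i\tan(\psi_{|n|})$ for $n\in\mathbb Z$, let $d\ge1$, and let $G_d(z)=\begin{pmatrix}a(z)&b(z)\\-b^*(z)&a^*(z)\end{pmatrix}$ be the $SU(2)$ nonlinear Fourier series of the sequence $(F_n\mathbf 1_{\{-d\le n\le d\}})_{n\in\mathbb Z}$. For $x\in[0,1]$ let $\theta\in[0,\pi/2]$ be the unique number with $\cos\theta=x$ and set $z=e^{2i\theta}$. Then $$i\,\operatorname{Im}(u_d(\Psi,x))=b(z).$$
   Context: For a function $a$ on a subset of the Riemann sphere, $a^*(z)=\overline{a(\overline{z}^{-1})}$. $W(x)=\begin{pmatrix}x& i\sqrt{1-x^2}\\ i\sqrt{1-x^2}& x\end{pmatrix}$, $Z=\begin{pmatrix}1&0\\0&-1\end{pmatrix}$; $U_0(\Psi,x)=e^{i\psi_0Z}$, $U_d(\Psi,x)=e^{i\psi_dZ}W(x)U_{d-1}(\Psi,x)W(x)e^{i\psi_dZ}$ for $d\ge1$; $u_d(\Psi,x)$ is the upper left entry of $U_d(\Psi,x)$. For a finitely supported sequence $F:\mathbb Z\to\mathbb C$ its $SU(2)$ nonlinear Fourier series is $G(z)=\prod_k(1+|F_k|^2)^{-1/2}\begin{pmatrix}1&F_kz^k\\-\overline{F_k}z^{-k}&1\end{pmatrix}$, product ordered with $k$ increasing from left to right; it has the form $\begin{pmatrix}a&b\\-b^*&a^*\end{pmatrix}$. *)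

theory Defs
  imports "HOL-Analysis.Analysis"
begin

type_synonym cmat2 = "complex^2^2"

definition mat2 :: "complex \<Rightarrow> complex \<Rightarrow> complex \<Rightarrow> complex \<Rightarrow> cmat2" where
  "mat2 a b c d = (\<chi> i j. if i = 1 then (if j = 1 then a else b) else (if j = 1 then c else d))"

definition Wm :: "real \<Rightarrow> cmat2" where
  "Wm x = mat2 (complex_of_real x) (\<i> * complex_of_real (sqrt (1 - x^2)))
               (\<i> * complex_of_real (sqrt (1 - x^2))) (complex_of_real x)"

definition expiZ :: "real \<Rightarrow> cmat2" where
  "expiZ psi = mat2 (exp (\<i> * complex_of_real psi)) 0 0 (exp (- \<i> * complex_of_real psi))"

fun Um :: "(nat \<Rightarrow> real) \<Rightarrow> nat \<Rightarrow> real \<Rightarrow> cmat2" where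
  "Um Psi 0 x = expiZ (Psi 0)"
| "Um Psi (Suc d) x = expiZ (Psi (Suc d)) ** Wm x ** Um Psi d x ** Wm x ** expiZ (Psi (Suc d))"

definition u_entry :: "(nat \<Rightarrow> real) \<Rightarrow> nat \<Rightarrow> real \<Rightarrow> complex" where
  "u_entry Psi d x = Um Psi d x $ 1 $ 1"

definition nlfs_factor :: "(int \<Rightarrow> complex) \<Rightarrow> complex \<Rightarrow> int \<Rightarrow> cmat2" where
  "nlfs_factor F z k =
     (1 / sqrt (1 + (cmod (F k))^2)) *\<^sub>R
       mat2 1 (F k * z powi k) (- cnj (F k) * z powi (-k)) 1"

text \<open>Ordered product (k increasing left to right) over the window [-N, N]\<close>
definition nlfs_window :: "(int \<Rightarrow> complex) \<Rightarrow> nat \<Rightarrow> complex \<Rightarrow> cmat2" where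
  "nlfs_window F N z = foldr (\<lambda>k M. nlfs_factor F z k ** M) [- int N .. int N] (mat 1)"

text \<open>SU(2) nonlinear Fourier series of a finitely supported F: product over all k;
  factors outside the support are the identity, so take the least symmetric window containing the support.\<close>
definition nlfs :: "(int \<Rightarrow> complex) \<Rightarrow> complex \<Rightarrow> cmat2" where
  "nlfs F z = nlfs_window F (LEAST N. \<forall>k. F k \<noteq> 0 \<longrightarrow> \<bar>k\<bar> \<le> int N) z"

end

theory Submission imports Defs begin

lemma expi: "exp (\<i> * complex_of_real a) = complex_of_real (cos a) + \<i> * complex_of_real (sin a)"
  by (simp add: cis_conv_exp[symmetric] complex_eq_iff)

lemma expmi: "exp (- \<i> * complex_of_real a) = complex_of_real (cos a) - \<i> * complex_of_real (sin a)"
proof -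
  have "exp (- \<i> * complex_of_real a) = exp (\<i> * complex_of_real (-a))" by simp
  then show ?thesis by (simp only: expi) simp
qed

lemma mat2_nth[simp]: "mat2 a b c d $ 1 $ 1 = a" "mat2 a b c d $ 1 $ 2 = b"
  "mat2 a b c d $ 2 $ 1 = c" "mat2 a b c d $ 2 $ 2 = d"
  by (simp_all add: mat2_def)

lemma mat2_eq: "(M::cmat2) = mat2 (M$1$1) (M$1$2) (M$2$1) (M$2$2)"
  by (simp add: vec_eq_iff forall_2 mat2_def)

lemma mat2_mult: "mat2 a b c d ** mat2 e f g h = mat2 (a*e+b*g) (a*f+b*h) (c*e+d*g) (c*f+d*h)"
  by (simp add: vec_eq_iff forall_2 matrix_matrix_mult_def sum_2)

lemma mat2_one: "(mat 1 :: cmat2) = mat2 1 0 0 1"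
  by (simp add: vec_eq_iff forall_2 mat_def mat2_def)

lemma mat2_scale: "r *\<^sub>R mat2 a b c d = mat2 (r *\<^sub>R a) (r *\<^sub>R b) (r *\<^sub>R c) (r *\<^sub>R d)"
  by (simp add: vec_eq_iff forall_2)

definition rr :: complex where "rr = complex_of_real (1 / sqrt 2)"
definition Bm :: cmat2 where "Bm = mat2 rr rr rr (- rr)"
definition Xm :: "real \<Rightarrow> cmat2" where
 "Xm a = mat2 (complex_of_real (cos a)) (\<i> * complex_of_real (sin a)) (\<i> * complex_of_real (sin a)) (complex_of_real (cos a))"

lemma rr2: "rr * rr = 1/2"
proof -
  have "(1 / sqrt 2) * (1 / sqrt 2) = (1/2::real)" by (simp flip: power2_eq_square add: power_divide)
  then show ?thesis unfolding rr_def by (metis of_real_mult of_real_divide of_real_1 of_real_numeral)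
qed

lemma BB: "Bm ** Bm = mat 1"
  by (simp add: Bm_def mat2_mult mat2_one rr2)

lemma BBM: "Bm ** (Bm ** M) = M"
  by (simp add: matrix_mul_assoc BB)

lemma BEB: "Bm ** expiZ a ** Bm = Xm a"
proof -
  have "Bm ** expiZ a ** Bm = mat2 (rr*rr*(exp (\<i> * complex_of_real a) + exp (- \<i> * complex_of_real a)))
     (rr*rr*(exp (\<i> * complex_of_real a) - exp (- \<i> * complex_of_real a)))
     (rr*rr*(exp (\<i> * complex_of_real a) - exp (- \<i> * complex_of_real a)))
     (rr*rr*(exp (\<i> * complex_of_real a) + exp (- \<i> * complex_of_real a)))"
    by (simp add: Bm_def expiZ_def mat2_mult algebra_simps)
  also have "\<dots> = Xm a" unfolding rr2 expi expmi Xm_def by (simp add: field_simps)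
  finally show ?thesis .
qed

lemma BXB: "Bm ** Xm a ** Bm = expiZ a"
  by (simp flip: BEB add: matrix_mul_assoc[symmetric] BBM BB matrix_mul_rid)

lemma E_BXB: "expiZ a = Bm ** (Xm a ** Bm)"
  using BXB[of a] by (simp add: matrix_mul_assoc)

fun Vm :: "(nat \<Rightarrow> real) \<Rightarrow> real \<Rightarrow> nat \<Rightarrow> cmat2" where
  "Vm Psi t 0 = Xm (Psi 0)"
| "Vm Psi t (Suc d) = Xm (Psi (Suc d)) ** expiZ t ** Vm Psi t d ** expiZ t ** Xm (Psi (Suc d))"

lemma W_X: assumes "0 \<le> t" "t \<le> pi/2" shows "Wm (cos t) = Xm t"
proof -
  have "sin t \<ge> 0" using assms by (intro sin_ge_zero) auto
  then have "sqrt (1 - (cos t)^2) = sin t" by (simp add: sin_squared_eq[symmetric])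
  then show ?thesis by (simp add: Wm_def Xm_def)
qed

lemma U_BVB: assumes "0 \<le> t" "t \<le> pi/2" shows "Um Psi d (cos t) = Bm ** (Vm Psi t d ** Bm)"
proof (induction d)
  case 0
  then show ?case using E_BXB by simp
next
  case (Suc d)
  have "Um Psi (Suc d) (cos t) = expiZ (Psi (Suc d)) ** Wm (cos t) ** Um Psi d (cos t) ** Wm (cos t) ** expiZ (Psi (Suc d))" by simp
  also have "\<dots> = (Bm ** (Xm (Psi (Suc d)) ** Bm)) ** (Bm ** (expiZ t ** Bm)) ** (Bm ** (Vm Psi t d ** Bm)) ** (Bm ** (expiZ t ** Bm)) ** (Bm ** (Xm (Psi (Suc d)) ** Bm))"
    using E_BXB[of "Psi (Suc d)"] BEB[of t] W_X[OF assms] Suc.IH by (simp add: matrix_mul_assoc)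
  also have "\<dots> = Bm ** (Vm Psi t (Suc d) ** Bm)"
    by (simp add: matrix_mul_assoc[symmetric] BBM)
  finally show ?case .
qed

definition su2 :: "cmat2 \<Rightarrow> bool" where
  "su2 M \<longleftrightarrow> M$2$2 = cnj (M$1$1) \<and> M$2$1 = - cnj (M$1$2)"

lemma su2_mult: assumes "su2 A" "su2 B" shows "su2 (A ** B)"
proof -
  have A: "A = mat2 (A$1$1) (A$1$2) (- cnj (A$1$2)) (cnj (A$1$1))"
    using assms(1) unfolding su2_def by (simp add: vec_eq_iff forall_2 mat2_def)
  have B: "B = mat2 (B$1$1) (B$1$2) (- cnj (B$1$2)) (cnj (B$1$1))"
    using assms(2) unfolding su2_def by (simp add: vec_eq_iff forall_2 mat2_def)
  show ?thesis
    apply (subst A, subst B)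
    unfolding mat2_mult su2_def mat2_nth by (simp add: algebra_simps)
qed

lemma transpose_mat2: "transpose (mat2 a b c d) = mat2 a c b d"
  by (simp add: vec_eq_iff forall_2 transpose_def mat2_def)

lemma su2_E: "su2 (expiZ a)"
  by (simp add: su2_def expiZ_def exp_cnj)

lemma tE: "transpose (expiZ a) = expiZ a" by (simp add: expiZ_def transpose_mat2)
lemma tW: "transpose (Wm a) = Wm a" by (simp add: Wm_def transpose_mat2)

lemma su2_W: "su2 (Wm x)"
  by (simp add: su2_def Wm_def)

lemma U_props: "su2 (Um Psi d x) \<and> transpose (Um Psi d x) = Um Psi d x"
proof (induction d)
  case 0
  then show ?case by (simp add: su2_E tE)
next
  case (Suc d)
  then show ?case
    by (simp add: su2_mult su2_E su2_W matrix_transpose_mul tE tW matrix_mul_assoc)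
qed

lemma V12: assumes "0 \<le> t" "t \<le> pi/2"
  shows "Vm Psi t d $ 1 $ 2 = \<i> * complex_of_real (Im (u_entry Psi d (cos t)))"
proof -
  let ?U = "Um Psi d (cos t)"
  have V: "Vm Psi t d = Bm ** (?U ** Bm)" using U_BVB[OF assms] by (simp add: matrix_mul_assoc[symmetric] BBM BB matrix_mul_rid)
  have tU: "transpose ?U = ?U" and sU: "su2 ?U" using U_props[of Psi d "cos t"] by auto
  have "transpose ?U $ 2 $ 1 = ?U $ 1 $ 2" unfolding transpose_def by simp
  then have s: "?U$2$2 = cnj (?U$1$1)" "?U$2$1 = ?U$1$2"
    using sU tU unfolding su2_def by auto
  have "Vm Psi t d $ 1 $ 2 = rr * rr * (?U$1$1 - ?U$1$2 + ?U$2$1 - ?U$2$2)"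
    unfolding V Bm_def by (subst mat2_eq[of ?U]) (simp add: mat2_mult algebra_simps)
  also have "\<dots> = (?U$1$1 - cnj (?U$1$1)) / 2" by (simp add: s rr2)
  also have "\<dots> = \<i> * complex_of_real (Im (?U$1$1))"
    by (simp add: complex_eq_iff)
  finally show ?thesis by (simp add: u_entry_def)
qed

lemma factor_eq:
  assumes "\<bar>p\<bar> < pi/2" "F k = \<i> * complex_of_real (tan p)"
  shows "nlfs_factor F (exp (2 * \<i> * complex_of_real t)) k
       = expiZ (of_int k * t) ** Xm p ** expiZ (- (of_int k * t))"
proof -
  have c: "1 / sqrt (1 + (cmod (F k))^2) = cos p" using cos_tan[OF assms(1)] assms(2)
    by (simp add: norm_mult)
  have cp: "cos p > 0" using assms(1) by (intro cos_gt_zero_pi) (auto simp: abs_less_iff)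
  have s: "cos p * tan p = sin p" using cos_tan[OF assms(1)] sin_tan[OF assms(1)] by simp
  have p1: "exp (2 * \<i> * complex_of_real t) powi k = exp (\<i> * of_real (of_int k * t)) * exp (\<i> * of_real (of_int k * t))"
  proof -
    have "exp (2 * \<i> * complex_of_real t) powi k = exp (\<i> * of_real (of_int k * t) + \<i> * of_real (of_int k * t))"
      unfolding exp_power_int by (rule arg_cong[where f=exp]) (simp add: algebra_simps)
    then show ?thesis unfolding exp_add .
  qed
  have p2: "exp (2 * \<i> * complex_of_real t) powi (-k) = exp (- \<i> * of_real (of_int k * t)) * exp (- \<i> * of_real (of_int k * t))"
  proof -
    have "exp (2 * \<i> * complex_of_real t) powi (-k) = exp (- \<i> * of_real (of_int k * t) + - \<i> * of_real (of_int k * t))"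
      unfolding exp_power_int by (rule arg_cong[where f=exp]) (simp add: algebra_simps)
    then show ?thesis unfolding exp_add .
  qed
  have e1b: "exp x * c * exp (- x) = (c::complex)" for x c by (simp add: exp_minus field_simps)
  have e1c: "exp (- x) * c * exp x = (c::complex)" for x c by (simp add: exp_minus field_simps)
  have e1: "exp x * exp (- x) = (1::complex)" for x
    by (simp flip: exp_add)
  have "nlfs_factor F (exp (2 * \<i> * complex_of_real t)) k = 
     mat2 (of_real (cos p)) (\<i> * of_real (sin p) * exp (\<i> * of_real (of_int k * t)) * exp (\<i> * of_real (of_int k * t)))
      (\<i> * of_real (sin p) * exp (- \<i> * of_real (of_int k * t)) * exp (- \<i> * of_real (of_int k * t))) (of_real (cos p))"
    unfolding nlfs_factor_def c mat2_scale p1 p2 using assms(2) s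
    using cp by (simp add: scaleR_conv_of_real flip: of_real_mult) (simp add: tan_def field_simps)
  also have "\<dots> = expiZ (of_int k * t) ** Xm p ** expiZ (- (of_int k * t))"
    unfolding expiZ_def Xm_def mat2_mult
    by (simp add: e1b e1c) (simp add: mult_ac)
  finally show ?thesis .
qed

lemma foldr_mat: "foldr (\<lambda>k M. f k ** M) xs M = foldr (\<lambda>k M. f k ** M) xs (mat 1) ** (M::cmat2)"
  by (induction xs) (simp_all add: matrix_mul_assoc)

lemma window_Suc: "nlfs_window F (Suc N) z = nlfs_factor F z (-(int N+1)) ** nlfs_window F N z ** nlfs_factor F z (int N + 1)"
proof -
  have l1: "[-(int N+1)..int N+1] = (-(int N+1)) # [- int N..int N+1]"
    using upto_rec1[of "-(int N+1)" "int N+1"] by simp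
  have l2: "[- int N..int N+1] = [- int N..int N] @ [int N+1]"
    using upto_rec2[of "- int N" "int N + 1"] by simp
  have e3: "int (Suc N) = int N + 1" by simp
  have l: "[- int (Suc N) .. int (Suc N)] = (-(int N+1)) # [- int N .. int N] @ [int N + 1]"
    unfolding e3 l1 l2 by simp
  show ?thesis unfolding nlfs_window_def l
    by (simp add: foldr_mat[of _ _ "nlfs_factor F z (int N + 1)"] matrix_mul_assoc)
qed

lemma expiZ_add: "expiZ a ** expiZ b = expiZ (a+b)"
  by (simp add: expiZ_def mat2_mult mult_exp_exp algebra_simps)

lemma EEM: "expiZ a ** (expiZ b ** M) = expiZ (a+b) ** M"
  by (simp add: matrix_mul_assoc expiZ_add)

lemma expiZ_0: "expiZ 0 = mat 1" by (simp add: expiZ_def mat2_one)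

lemma window_eq:
  assumes P: "\<And>k. \<bar>Psi k\<bar> < pi/2"
    and F: "\<And>k. \<bar>k\<bar> \<le> int d \<Longrightarrow> F k = \<i> * complex_of_real (tan (Psi (nat \<bar>k\<bar>)))"
  shows "N \<le> d \<Longrightarrow> nlfs_window F N (exp (2 * \<i> * complex_of_real t))
     = expiZ (- (real N * t)) ** (Vm Psi t N ** expiZ (- (real N * t)))"
proof (induction N)
  case 0
  have "nlfs_window F 0 (exp (2 * \<i> * complex_of_real t)) = nlfs_factor F (exp (2 * \<i> * complex_of_real t)) 0"
    by (simp add: nlfs_window_def)
  also have "\<dots> = Xm (Psi 0)" using factor_eq[of "Psi 0" F 0 t] P F[of 0]
    by (simp add: expiZ_0)
  finally show ?case by (simp add: expiZ_0)
next
  case (Suc N)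
  let ?z = "exp (2 * \<i> * complex_of_real t)"
  let ?X = "Xm (Psi (Suc N))"
  have fa: "F (-(int N+1)) = \<i> * complex_of_real (tan (Psi (Suc N)))"
    using F[of "-(int N+1)"] Suc.prems by (simp add: nat_add_distrib)
  have fb: "F (int N+1) = \<i> * complex_of_real (tan (Psi (Suc N)))"
    using F[of "int N+1"] Suc.prems by (simp add: nat_add_distrib)
  have q1: "real_of_int (-(int N+1)) * t = - (real (Suc N) * t)" "- (real_of_int (-(int N+1)) * t) = real (Suc N) * t"
    "real_of_int (int N+1) * t = real (Suc N) * t" by (simp_all add: algebra_simps)
  have f1: "nlfs_factor F ?z (-(int N+1)) = expiZ (- (real (Suc N) * t)) ** ?X ** expiZ (real (Suc N) * t)"
    using factor_eq[of "Psi (Suc N)" F "-(int N+1)" t, OF P fa] unfolding q1 by simp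
  have f2: "nlfs_factor F ?z (int N+1) = expiZ (real (Suc N) * t) ** ?X ** expiZ (- (real (Suc N) * t))"
    using factor_eq[of "Psi (Suc N)" F "int N+1" t, OF P fb] unfolding q1 .
  have a1: "real (Suc N) * t + - (real N * t) = t" by (simp add: algebra_simps)
  have a2: "- (real N * t) + real (Suc N) * t = t" by (simp add: algebra_simps)
  have "nlfs_window F (Suc N) ?z = (expiZ (- (real (Suc N) * t)) ** ?X ** expiZ (real (Suc N) * t))
     ** (expiZ (- (real N * t)) ** (Vm Psi t N ** expiZ (- (real N * t))))
     ** (expiZ (real (Suc N) * t) ** ?X ** expiZ (- (real (Suc N) * t)))"
    using window_Suc[of F N ?z] f1 f2 Suc by simp
  also have "\<dots> = expiZ (- (real (Suc N) * t)) ** (?X ** (expiZ (real (Suc N) * t + - (real N * t)) ** (Vm Psi t N ** (expiZ (- (real N * t) + real (Suc N) * t) ** (?X ** expiZ (- (real (Suc N) * t)))))))"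
    by (simp only: matrix_mul_assoc[symmetric] EEM)
  also have "\<dots> = expiZ (- (real (Suc N) * t)) ** (Vm Psi t (Suc N) ** expiZ (- (real (Suc N) * t)))"
    unfolding a1 a2 by (simp add: matrix_mul_assoc)
  finally show ?case .
qed

lemma factor_zero: "F k = 0 \<Longrightarrow> nlfs_factor F z k = mat 1"
  by (simp add: nlfs_factor_def mat2_one)

theorem lemma4p2:
  fixes Psi :: "nat \<Rightarrow> real" and d :: nat and x theta :: real
  assumes "\<And>k. - (pi / 2) < Psi k \<and> Psi k < pi / 2"
    and "d \<ge> 1"
    and "0 \<le> x" and "x \<le> 1"
    and "0 \<le> theta" and "theta \<le> pi / 2" and "cos theta = x"
  shows "\<i> * complex_of_real (Im (u_entry Psi d x))
       = nlfs (\<lambda>n. if - int d \<le> n \<and> n \<le> int d then \<i> * complex_of_real (tan (Psi (nat \<bar>n\<bar>))) else 0)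
              (exp (2 * \<i> * complex_of_real theta)) $ 1 $ 2"
proof -
  define F where "F = (\<lambda>n. if - int d \<le> n \<and> n \<le> int d then \<i> * complex_of_real (tan (Psi (nat \<bar>n\<bar>))) else (0::complex))"
  define z where "z = exp (2 * \<i> * complex_of_real theta)"
  define L where "L = (LEAST N. \<forall>k. F k \<noteq> 0 \<longrightarrow> \<bar>k\<bar> \<le> int N)"
  have Pd: "\<forall>k. F k \<noteq> 0 \<longrightarrow> \<bar>k\<bar> \<le> int d" by (auto simp: F_def)
  have PL: "\<forall>k. F k \<noteq> 0 \<longrightarrow> \<bar>k\<bar> \<le> int L" unfolding L_def by (rule LeastI[of _ d], rule Pd)
  have Ld: "L \<le> d" unfolding L_def by (rule Least_le, rule Pd)
  have step: "L \<le> N \<Longrightarrow> N \<le> d \<Longrightarrow> nlfs_window F N z = nlfs_window F L z" for N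
  proof (induction N rule: dec_induct)
    case base then show ?case by simp
  next
    case (step N)
    have "F (-(int N+1)) = 0" "F (int N + 1) = 0" using PL step.hyps by force+
    then show ?case using window_Suc[of F N z] step by (simp add: factor_zero)
  qed
  have P: "\<bar>Psi k\<bar> < pi/2" for k using assms(1)[of k] unfolding abs_less_iff by linarith
  have Fd: "\<And>k. \<bar>k\<bar> \<le> int d \<Longrightarrow> F k = \<i> * complex_of_real (tan (Psi (nat \<bar>k\<bar>)))"
    by (simp add: F_def abs_le_iff)
  have "nlfs F z = nlfs_window F d z" unfolding nlfs_def L_def[symmetric] using step[OF Ld order.refl] by simp
  also have "\<dots> = expiZ (- (real d * theta)) ** (Vm Psi theta d ** expiZ (- (real d * theta)))"
    unfolding z_def apply (rule window_eq[of Psi d F]) using P Fd by auto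
  finally have "nlfs F z $ 1 $ 2 = Vm Psi theta d $ 1 $ 2"
    by (subst (asm) mat2_eq[of "Vm Psi theta d"])
       (simp add: expiZ_def mat2_mult mult_exp_exp)
  also have "\<dots> = \<i> * complex_of_real (Im (u_entry Psi d x))"
    using V12[OF assms(5,6), of Psi d] assms(7) by simp
  finally show ?thesis unfolding F_def z_def by simp
qed

end
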